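(* Let $d\ge 1$. There is a unique map $\operatorname{vol}^\otimes_d$ from the set of multirectangles in $\mathbb{R}^d$ to $\mathbb{R}^{\otimes d}$ that is additive under disjoint unions and maps each rectangle $\prod_{i=1}^d[a_i,a_i+t_i)$ (with $t_i>0$) to $t_1\otimes\cdots\otimes t_d$.
   Context: A rectangle in $\mathbb{R}^d$ is a set $\prod_{i=1}^d[a_i,b_i)$ with $a_i<b_i$ real. A multirectangle is a finite union of rectangles (the empty set included). $\mathbb{R}^{\otimes d}$ denotes the $d$-th tensor power of $\mathbb{R}$ over $\mathbb{Q}$. *)

theory Defs
  imports Complex_Main "HOL-Library.Poly_Mapping"
begin

definition rect :: "nat \<Rightarrow> real list \<Rightarrow> real list \<Rightarrow> real list set" where
  "rect d a b = {x. length x = d \<and> (\<forall>i<d. a ! i \<le> x ! i \<and> x ! i < b ! i)}"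

definition is_rect :: "nat \<Rightarrow> real list set \<Rightarrow> bool" where
  "is_rect d R \<longleftrightarrow> (\<exists>a b. length a = d \<and> length b = d \<and> (\<forall>i<d. a ! i < b ! i) \<and> R = rect d a b)"

definition multirect :: "nat \<Rightarrow> real list set \<Rightarrow> bool" where
  "multirect d M \<longleftrightarrow> (\<exists>F. finite F \<and> (\<forall>R\<in>F. is_rect d R) \<and> M = \<Union>F)"

text \<open>Formal Q-linear combinations of words of reals, modulo the multilinearity relations
  (in each slot). The degree-d part is the d-th tensor power of R over Q.\<close>

definition pt :: "real list \<Rightarrow> (real list \<Rightarrow>\<^sub>0 rat)" where
  "pt xs = Poly_Mapping.single xs 1"

definition qscale :: "rat \<Rightarrow> (real list \<Rightarrow>\<^sub>0 rat) \<Rightarrow> (real list \<Rightarrow>\<^sub>0 rat)" where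
  "qscale q p = Poly_Mapping.map ((*) q) p"

lemma lookup_qscale [simp]: "poly_mapping.lookup (qscale q p) k = q * poly_mapping.lookup p k"
  unfolding qscale_def by transfer (simp add: when_def)

lemma qscale_minus_one: "qscale (-1) p = - p"
  by (rule poly_mapping_eqI) (simp add: lookup_minus)

inductive_set tensor_rel :: "(real list \<Rightarrow>\<^sub>0 rat) set" where
  zero: "0 \<in> tensor_rel"
| add_gen: "pt (xs @ [a + b] @ ys) - pt (xs @ [a] @ ys) - pt (xs @ [b] @ ys) \<in> tensor_rel"
| hom_gen: "pt (xs @ [of_rat q * a] @ ys) - qscale q (pt (xs @ [a] @ ys)) \<in> tensor_rel"
| plus: "p \<in> tensor_rel \<Longrightarrow> p' \<in> tensor_rel \<Longrightarrow> p + p' \<in> tensor_rel"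
| scale: "p \<in> tensor_rel \<Longrightarrow> qscale q p \<in> tensor_rel"

definition tensor_equiv :: "(real list \<Rightarrow>\<^sub>0 rat) \<Rightarrow> (real list \<Rightarrow>\<^sub>0 rat) \<Rightarrow> bool" where
  "tensor_equiv p q \<longleftrightarrow> p - q \<in> tensor_rel"

lemma tensor_rel_uminus: "p \<in> tensor_rel \<Longrightarrow> - p \<in> tensor_rel"
  by (metis qscale_minus_one tensor_rel.scale)

lemma equivp_tensor_equiv: "equivp tensor_equiv"
proof (rule equivpI)
  show "reflp tensor_equiv" by (simp add: reflp_def tensor_equiv_def tensor_rel.zero)
  show "symp tensor_equiv" unfolding symp_def tensor_equiv_def
    by (metis minus_diff_eq tensor_rel_uminus)
  show "transp tensor_equiv" unfolding transp_def tensor_equiv_def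
    by (metis diff_add_cancel add_diff_eq tensor_rel.plus)
qed

quotient_type tensor = "real list \<Rightarrow>\<^sub>0 rat" / tensor_equiv
  by (rule equivp_tensor_equiv)

instantiation tensor :: zero
begin
lift_definition zero_tensor :: tensor is "0 :: real list \<Rightarrow>\<^sub>0 rat" .
instance ..
end

instantiation tensor :: plus
begin
lift_definition plus_tensor :: "tensor \<Rightarrow> tensor \<Rightarrow> tensor" is "(+)"
  unfolding tensor_equiv_def
  by (metis (no_types, lifting) add_diff_add tensor_rel.plus)
instance ..
end

lift_definition ptensor :: "real list \<Rightarrow> tensor" is pt .

definition tensor_deg :: "nat \<Rightarrow> tensor set" where
  "tensor_deg d = {x. \<exists>p. x = abs_tensor p \<and> (\<forall>xs. poly_mapping.lookup p xs \<noteq> 0 \<longrightarrow> length xs = d)}"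

end

theory Submission
  imports Defs
begin

lemma lookup_pt: "poly_mapping.lookup (pt k) x = (if k = x then 1 else 0)"
  by (simp add: pt_def Poly_Mapping.lookup_single when_def)

lemma qscale_add: "qscale c (p + q) = qscale c p + qscale c q"
  by (rule poly_mapping_eqI) (simp add: Poly_Mapping.lookup_add algebra_simps)

lemma qscale_diff: "qscale c (p - q) = qscale c p - qscale c q"
  by (rule poly_mapping_eqI) (simp add: Poly_Mapping.lookup_minus algebra_simps)

lemma qscale_one [simp]: "qscale 1 p = p"
  by (rule poly_mapping_eqI) simp

lemma rel_sum: "(\<And>i. i \<in> I \<Longrightarrow> f i \<in> tensor_rel) \<Longrightarrow> sum f I \<in> tensor_rel"
proof (induction I rule: infinite_finite_induct)
  case (infinite A) then show ?case by (simp add: tensor_rel.zero)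
next
  case empty then show ?case by (simp add: tensor_rel.zero)
next
  case (insert x F) then show ?case by (simp add: tensor_rel.plus)
qed

lemma rel_diff: "p \<in> tensor_rel \<Longrightarrow> q \<in> tensor_rel \<Longrightarrow> p - q \<in> tensor_rel"
  by (metis diff_conv_add_uminus tensor_rel.plus tensor_rel_uminus)

lemma tensor_cancel: "(x::tensor) + x = x \<Longrightarrow> x = 0"
proof (induction x rule: tensor.abs_induct)
  case (1 p)
  then have "tensor_equiv (p + p) p" by (simp add: plus_tensor.abs_eq tensor.abs_eq_iff)
  then have "p \<in> tensor_rel" unfolding tensor_equiv_def by simp
  then have "tensor_equiv p 0" unfolding tensor_equiv_def by simp
  then show ?case by (simp add: zero_tensor.abs_eq tensor.abs_eq_iff)
qed

lemma pow_split_sum: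
  assumes "finite D" "i \<in> D"
  shows "(\<Sum>S\<in>Pow D. g S) = (\<Sum>S\<in>Pow (D-{i}). g S + g (insert i S))"
proof -
  have D: "D = insert i (D - {i})" using assms by auto
  have P: "Pow D = Pow (D-{i}) \<union> insert i ` Pow (D-{i})" by (subst D, rule Pow_insert)
  have dj: "Pow (D-{i}) \<inter> insert i ` Pow (D-{i}) = {}" by auto
  have inj: "inj_on (insert i) (Pow (D-{i}))" by (auto simp: inj_on_def)
  have f: "finite (Pow (D-{i}))" using assms by simp
  have "(\<Sum>S\<in>Pow D. g S) = (\<Sum>S\<in>Pow (D-{i}). g S) + (\<Sum>S\<in>insert i ` Pow (D-{i}). g S)"
    unfolding P by (rule sum.union_disjoint) (use f dj in auto)
  also have "(\<Sum>S\<in>insert i ` Pow (D-{i}). g S) = (\<Sum>S\<in>Pow (D-{i}). g (insert i S))"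
    by (rule sum.reindex[OF inj, unfolded comp_def])
  finally show ?thesis by (simp add: sum.distrib)
qed
lemma card_diff_insert:
  assumes "finite D" "i \<in> D" "S \<subseteq> D - {i}"
  shows "card (D - S) = Suc (card (D - insert i S))"
proof -
  have "D - S = insert i (D - insert i S)" using assms by auto
  moreover have "finite (D - insert i S)" using assms(1) by simp
  moreover have "i \<notin> D - insert i S" by simp
  ultimately show ?thesis by (metis card_insert_disjoint)
qed

lemma pairing:
  assumes "finite D" "i \<in> D" "\<And>S. f (insert i S) = f S"
  shows "(\<Sum>S\<in>Pow D. (-1::rat)^card (D-S) * f S) = 0"
proof -
  have "(\<Sum>S\<in>Pow D. (-1::rat)^card (D-S) * f S)
     = (\<Sum>S\<in>Pow (D-{i}). (-1::rat)^card (D-S) * f S + (-1)^card (D - insert i S) * f (insert i S))"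
    by (rule pow_split_sum[OF assms(1,2), of "\<lambda>S. (-1::rat)^card (D-S) * f S"])
  also have "\<dots> = (\<Sum>S\<in>Pow (D-{i}). 0)"
  proof (rule sum.cong[OF refl])
    fix S assume "S \<in> Pow (D-{i})"
    then have "card (D-S) = Suc (card (D - insert i S))" by (intro card_diff_insert[OF assms(1,2)]) auto
    then show "(-1::rat)^card (D-S) * f S + (-1)^card (D - insert i S) * f (insert i S) = 0"
      by (simp add: assms(3))
  qed
  finally show ?thesis by simp
qed


definition mix :: "nat \<Rightarrow> real list \<Rightarrow> real list \<Rightarrow> real list \<Rightarrow> nat \<Rightarrow> nat set \<Rightarrow> real list" where
  "mix d a b t n S = map (\<lambda>k. if k < n then (if k \<in> S then b!k else a!k) else t!k) [0..<d]"

definition QQ :: "nat \<Rightarrow> real list \<Rightarrow> real list \<Rightarrow> real list \<Rightarrow> nat \<Rightarrow> (real list \<Rightarrow>\<^sub>0 rat)" where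
  "QQ d a b t n = (\<Sum>S\<in>Pow {..<n}. qscale ((-1)^card ({..<n}-S)) (pt (mix d a b t n S)))"

lemma add_gen_upd: "n < length l \<Longrightarrow> pt (l[n := a + b]) - pt (l[n := a]) - pt (l[n := b]) \<in> tensor_rel"
  using tensor_rel.add_gen[of "take n l" a b "drop (Suc n) l"] by (simp add: upd_conv_take_nth_drop)

lemma QQ_step:
  assumes "n < d" "\<And>k. k < d \<Longrightarrow> b!k = a!k + t!k"
  shows "QQ d a b t (Suc n) - QQ d a b t n \<in> tensor_rel"
proof -
  let ?g = "\<lambda>S. qscale ((-1)^card ({..<Suc n}-S)) (pt (mix d a b t (Suc n) S))"
  let ?c = "\<lambda>S. (-1::rat)^card ({..<n}-S)"
  let ?l = "\<lambda>S. mix d a b t n S"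
  have e0: "QQ d a b t (Suc n) = (\<Sum>S\<in>Pow ({..<Suc n}-{n}). ?g S + ?g (insert n S))"
    unfolding QQ_def by (rule pow_split_sum[of "{..<Suc n}" n ?g]) auto
  have eq: "{..<Suc n}-{n} = {..<n}" by auto
  have e1: "QQ d a b t (Suc n) = (\<Sum>S\<in>Pow {..<n}. ?g S + ?g (insert n S))"
    using e0 eq by (simp only:)
  have len: "length (?l S) = d" for S by (simp add: mix_def)
  have m1: "mix d a b t (Suc n) S = (?l S)[n := a!n]" if "S \<subseteq> {..<n}" for S
    using that assms(1) by (intro nth_equalityI) (auto simp: mix_def nth_list_update less_Suc_eq)
  have m2: "mix d a b t (Suc n) (insert n S) = (?l S)[n := b!n]" if "S \<subseteq> {..<n}" for S
    using that assms(1) by (intro nth_equalityI) (auto simp: mix_def nth_list_update less_Suc_eq)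
  have m3: "?l S = (?l S)[n := t!n]" for S
    using assms(1) by (intro nth_equalityI) (auto simp: mix_def nth_list_update)
  have c1: "card ({..<Suc n}-S) = Suc (card ({..<n} - S))" if "S \<subseteq> {..<n}" for S
  proof -
    have "{..<Suc n}-S = insert n ({..<n} - S)" using that by auto
    then show ?thesis by simp
  qed
  have c2: "{..<Suc n}- insert n S = {..<n} - S" for S by auto
  have "QQ d a b t (Suc n) - QQ d a b t n =
      (\<Sum>S\<in>Pow {..<n}. ?g S + ?g (insert n S) - qscale (?c S) (pt (?l S)))"
    by (subst e1) (simp add: QQ_def sum_subtractf)
  also have "\<dots> = (\<Sum>S\<in>Pow {..<n}. qscale (?c S)
        (pt ((?l S)[n := a!n + t!n]) - pt ((?l S)[n := a!n]) - pt ((?l S)[n := t!n])))"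
  proof (rule sum.cong[OF refl])
    fix S assume S: "S \<in> Pow {..<n}"
    then have S': "S \<subseteq> {..<n}" by simp
    have gS: "?g S = qscale (- ?c S) (pt ((?l S)[n := a!n]))" using c1[OF S'] m1[OF S'] by simp
    have gI: "?g (insert n S) = qscale (?c S) (pt ((?l S)[n := a!n + t!n]))"
      using c2[of S] m2[OF S'] assms(2)[of n] assms(1) by simp
    have l: "pt (?l S) = pt ((?l S)[n := t!n])" by (rule arg_cong[OF m3])
    show "?g S + ?g (insert n S) - qscale (?c S) (pt (?l S)) = qscale (?c S)
        (pt ((?l S)[n := a!n + t!n]) - pt ((?l S)[n := a!n]) - pt ((?l S)[n := t!n]))"
      unfolding gS gI
      apply (subst l)
      by (rule poly_mapping_eqI) (simp add: Poly_Mapping.lookup_add Poly_Mapping.lookup_minus algebra_simps)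
  qed
  also have "\<dots> \<in> tensor_rel"
    by (rule rel_sum, rule tensor_rel.scale, rule add_gen_upd) (simp add: len assms(1))
  finally show ?thesis .
qed

lemma QQ_final:
  assumes "n \<le> d" "\<And>k. k < d \<Longrightarrow> b!k = a!k + t!k" "length t = d"
  shows "QQ d a b t n - pt t \<in> tensor_rel"
  using assms(1)
proof (induction n)
  case 0
  have "mix d a b t 0 {} = t" using assms(3) by (intro nth_equalityI) (auto simp: mix_def)
  then show ?case by (simp add: QQ_def tensor_rel.zero)
next
  case (Suc n)
  have "QQ d a b t (Suc n) - pt t = (QQ d a b t (Suc n) - QQ d a b t n) + (QQ d a b t n - pt t)"
    by simp
  moreover have "QQ d a b t (Suc n) - QQ d a b t n \<in> tensor_rel"
    using Suc.prems QQ_step[of n d b a t] assms(2) by simp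
  moreover have "QQ d a b t n - pt t \<in> tensor_rel" using Suc by simp
  ultimately show ?case by (metis tensor_rel.plus)
qed

definition shift :: "real list \<Rightarrow> nat set \<Rightarrow> real \<Rightarrow> real list" where
  "shift x S \<delta> = map (\<lambda>i. x!i - (if i \<in> S then \<delta> else 0)) [0..<length x]"

definition lv :: "real list set \<Rightarrow> real list \<Rightarrow> nat set \<Rightarrow> bool" where
  "lv M x S = (\<forall>\<^sub>F \<delta> in at_right (0::real). shift x S \<delta> \<in> M)"

definition Cc :: "real \<Rightarrow> real \<Rightarrow> real \<Rightarrow> bool \<Rightarrow> bool" where
  "Cc a b y s = (if s then a < y \<and> y \<le> b else a \<le> y \<and> y < b)"

lemma ev1_pos:
  assumes "Cc a b y s"
  shows "\<forall>\<^sub>F \<delta> in at_right (0::real). a \<le> y - (if s then \<delta> else 0) \<and> y - (if s then \<delta> else 0) < b"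
proof (cases s)
  case True
  then have "a < y" "y \<le> b" using assms by (auto simp: Cc_def)
  then show ?thesis using True unfolding eventually_at_right_field
    by (intro exI[of _ "y - a"]) auto
next
  case False
  then show ?thesis using assms by (auto simp: Cc_def)
qed

lemma ev1_neg:
  assumes "\<not> Cc a b y s"
  shows "\<forall>\<^sub>F \<delta> in at_right (0::real). \<not> (a \<le> y - (if s then \<delta> else 0) \<and> y - (if s then \<delta> else 0) < b)"
proof (cases s)
  case True
  then have "y \<le> a \<or> b < y" using assms by (auto simp: Cc_def)
  then show ?thesis
  proof
    assume "y \<le> a" then show ?thesis using True unfolding eventually_at_right_field
      by (intro exI[of _ 1]) auto
  next
    assume "b < y" then show ?thesis using True unfolding eventually_at_right_field
      by (intro exI[of _ "y - b"]) auto
  qed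
next
  case False
  then show ?thesis using assms by (auto simp: Cc_def)
qed

lemma shift_in_rect:
  "length x = d \<Longrightarrow> shift x S \<delta> \<in> rect d a b \<longleftrightarrow>
     (\<forall>k<d. a!k \<le> x!k - (if k \<in> S then \<delta> else 0) \<and> x!k - (if k \<in> S then \<delta> else 0) < b!k)"
  by (auto simp: shift_def rect_def)

lemma rect_ev_pos:
  assumes "length x = d" "\<forall>k<d. Cc (a!k) (b!k) (x!k) (k \<in> S)"
  shows "\<forall>\<^sub>F \<delta> in at_right (0::real). shift x S \<delta> \<in> rect d a b"
proof -
  have "\<forall>\<^sub>F \<delta> in at_right (0::real). \<forall>k\<in>{..<d}. a!k \<le> x!k - (if k \<in> S then \<delta> else 0) \<and> x!k - (if k \<in> S then \<delta> else 0) < b!k"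
  proof (intro eventually_ball_finite ballI)
    fix k assume "k \<in> {..<d}"
    then show "\<forall>\<^sub>F \<delta> in at_right (0::real). a!k \<le> x!k - (if k \<in> S then \<delta> else 0) \<and> x!k - (if k \<in> S then \<delta> else 0) < b!k"
      using assms(2) by (intro ev1_pos) auto
  qed simp
  then show ?thesis by eventually_elim (simp add: shift_in_rect[OF assms(1)])
qed

lemma rect_ev_neg:
  assumes "length x = d" "\<not> (\<forall>k<d. Cc (a!k) (b!k) (x!k) (k \<in> S))"
  shows "\<forall>\<^sub>F \<delta> in at_right (0::real). shift x S \<delta> \<notin> rect d a b"
proof -
  obtain k where k: "k < d" "\<not> Cc (a!k) (b!k) (x!k) (k \<in> S)" using assms(2) by auto
  from ev1_neg[OF k(2)] show ?thesis
    by eventually_elim (use k(1) in \<open>auto simp: shift_in_rect[OF assms(1)]\<close>)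
qed

definition repr :: "nat \<Rightarrow> (real list \<times> real list) set \<Rightarrow> real list set \<Rightarrow> bool" where
  "repr d P M \<longleftrightarrow> finite P \<and> (\<forall>p\<in>P. length (fst p) = d \<and> length (snd p) = d \<and> (\<forall>i<d. fst p!i < snd p!i))
     \<and> M = (\<Union>p\<in>P. rect d (fst p) (snd p))"

lemma multirect_repr: "multirect d M \<Longrightarrow> \<exists>P. repr d P M"
proof -
  assume "multirect d M"
  then obtain F where F: "finite F" "\<forall>R\<in>F. is_rect d R" "M = \<Union>F" unfolding multirect_def by blast
  have "\<forall>R\<in>F. \<exists>p. length (fst p) = d \<and> length (snd p) = d \<and> (\<forall>i<d. fst p!i < snd p!i) \<and> R = rect d (fst p) (snd p)"
    using F(2) unfolding is_rect_def by fastforce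
  then obtain f where f: "\<forall>R\<in>F. length (fst (f R)) = d \<and> length (snd (f R)) = d \<and> (\<forall>i<d. fst (f R)!i < snd (f R)!i) \<and> R = rect d (fst (f R)) (snd (f R))"
    by metis
  have "repr d (f ` F) M" unfolding repr_def using F f by auto
  then show ?thesis by blast
qed

lemma repr_len: "repr d P M \<Longrightarrow> y \<in> M \<Longrightarrow> length y = d"
  by (auto simp: repr_def rect_def)

lemma lv_char:
  assumes "repr d P M" "length x = d"
  shows "lv M x S \<longleftrightarrow> (\<exists>p\<in>P. \<forall>k<d. Cc (fst p!k) (snd p!k) (x!k) (k \<in> S))"
    and "\<not> (\<exists>p\<in>P. \<forall>k<d. Cc (fst p!k) (snd p!k) (x!k) (k \<in> S)) \<Longrightarrow>
           \<forall>\<^sub>F \<delta> in at_right (0::real). shift x S \<delta> \<notin> M"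
proof -
  have fin: "finite P" and M: "M = (\<Union>p\<in>P. rect d (fst p) (snd p))" using assms(1) by (auto simp: repr_def)
  show neg: "\<forall>\<^sub>F \<delta> in at_right (0::real). shift x S \<delta> \<notin> M"
    if "\<not> (\<exists>p\<in>P. \<forall>k<d. Cc (fst p!k) (snd p!k) (x!k) (k \<in> S))"
  proof -
    have "\<forall>\<^sub>F \<delta> in at_right (0::real). \<forall>p\<in>P. shift x S \<delta> \<notin> rect d (fst p) (snd p)"
    proof (intro eventually_ball_finite fin ballI)
      fix p assume "p \<in> P"
      then show "\<forall>\<^sub>F \<delta> in at_right (0::real). shift x S \<delta> \<notin> rect d (fst p) (snd p)"
        using that by (intro rect_ev_neg[OF assms(2)]) auto
    qed
    then show ?thesis unfolding M by eventually_elim auto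
  qed
  show "lv M x S \<longleftrightarrow> (\<exists>p\<in>P. \<forall>k<d. Cc (fst p!k) (snd p!k) (x!k) (k \<in> S))"
  proof
    assume l: "lv M x S"
    show "\<exists>p\<in>P. \<forall>k<d. Cc (fst p!k) (snd p!k) (x!k) (k \<in> S)"
    proof (rule ccontr)
      assume "\<not> ?thesis"
      from neg[OF this] l have "\<forall>\<^sub>F \<delta> in at_right (0::real). False"
        unfolding lv_def by eventually_elim auto
      then show False by (simp add: trivial_limit_at_right_real)
    qed
  next
    assume "\<exists>p\<in>P. \<forall>k<d. Cc (fst p!k) (snd p!k) (x!k) (k \<in> S)"
    then obtain p where p: "p \<in> P" "\<forall>k<d. Cc (fst p!k) (snd p!k) (x!k) (k \<in> S)" by blast
    from rect_ev_pos[OF assms(2) p(2)] show "lv M x S" unfolding lv_def M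
      by eventually_elim (use p(1) in auto)
  qed
qed

lemma lv_decided:
  assumes "repr d P M"
  shows "lv M x S \<or> (\<forall>\<^sub>F \<delta> in at_right (0::real). shift x S \<delta> \<notin> M)"
proof (cases "length x = d")
  case True then show ?thesis using lv_char[OF assms True] by blast
next
  case False
  have "shift x S \<delta> \<notin> M" for \<delta> using repr_len[OF assms] False by (force simp: shift_def)
  then show ?thesis by simp
qed

lemma lv_not_both: "lv M x S \<Longrightarrow> \<forall>\<^sub>F \<delta> in at_right (0::real). shift x S \<delta> \<notin> M \<Longrightarrow> False"
proof -
  assume "lv M x S" "\<forall>\<^sub>F \<delta> in at_right (0::real). shift x S \<delta> \<notin> M"
  then have "\<forall>\<^sub>F \<delta> in at_right (0::real). False" unfolding lv_def by eventually_elim auto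
  then show False by (simp add: trivial_limit_at_right_real)
qed

lemma lv_union:
  assumes "repr d P A" "repr d Q B" "A \<inter> B = {}"
  shows "(if lv (A \<union> B) x S then 1 else 0 :: rat) = (if lv A x S then 1 else 0) + (if lv B x S then 1 else 0)"
proof -
  have dA: "lv A x S \<or> (\<forall>\<^sub>F \<delta> in at_right (0::real). shift x S \<delta> \<notin> A)" by (rule lv_decided[OF assms(1)])
  have dB: "lv B x S \<or> (\<forall>\<^sub>F \<delta> in at_right (0::real). shift x S \<delta> \<notin> B)" by (rule lv_decided[OF assms(2)])
  have mono: "lv X x S \<Longrightarrow> X \<subseteq> Y \<Longrightarrow> lv Y x S" for X Y
    unfolding lv_def by (erule eventually_mono) auto
  have nAB: "\<not> (lv A x S \<and> lv B x S)"
  proof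
    assume "lv A x S \<and> lv B x S"
    then have "\<forall>\<^sub>F \<delta> in at_right (0::real). shift x S \<delta> \<in> A \<and> shift x S \<delta> \<in> B"
      unfolding lv_def by (simp add: eventually_conj)
    then have "\<forall>\<^sub>F \<delta> in at_right (0::real). False" by eventually_elim (use assms(3) in auto)
    then show False by (simp add: trivial_limit_at_right_real)
  qed
  show ?thesis
  proof (cases "lv A x S \<or> lv B x S")
    case True
    then have "lv (A \<union> B) x S" using mono by blast
    then show ?thesis using True nAB by auto
  next
    case False
    then have "\<forall>\<^sub>F \<delta> in at_right (0::real). shift x S \<delta> \<notin> A \<and> shift x S \<delta> \<notin> B"
      using dA dB by (simp add: eventually_conj)
    then have "\<forall>\<^sub>F \<delta> in at_right (0::real). shift x S \<delta> \<notin> A \<union> B" by eventually_elim auto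
    then have "\<not> lv (A \<union> B) x S" using lv_not_both by blast
    then show ?thesis using False by auto
  qed
qed

definition w :: "nat \<Rightarrow> real list set \<Rightarrow> real list \<Rightarrow> rat" where
  "w d M x = (\<Sum>S\<in>Pow {..<d}. (-1::rat)^card ({..<d}-S) * (if lv M x S then 1 else 0))"

lemma w_union:
  assumes "repr d P A" "repr d Q B" "A \<inter> B = {}"
  shows "w d (A \<union> B) x = w d A x + w d B x"
  unfolding w_def lv_union[OF assms] by (simp add: sum.distrib algebra_simps)

lemma Cc_indep: "y \<noteq> a \<Longrightarrow> y \<noteq> b \<Longrightarrow> Cc a b y s = Cc a b y s'"
  by (auto simp: Cc_def)

definition GG :: "(real list \<times> real list) set \<Rightarrow> real set" where
  "GG P = (\<Union>p\<in>P. set (fst p) \<union> set (snd p))"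

lemma w_support:
  assumes "repr d P M" "w d M x \<noteq> 0"
  shows "length x = d \<and> set x \<subseteq> GG P"
proof -
  have len: "length x = d"
  proof (rule ccontr)
    assume nl: "length x \<noteq> d"
    have "\<not> lv M x S" for S
    proof
      assume "lv M x S"
      moreover have "\<forall>\<^sub>F \<delta> in at_right (0::real). shift x S \<delta> \<notin> M"
        by (intro always_eventually allI) (use repr_len[OF assms(1)] nl in \<open>force simp: shift_def\<close>)
      ultimately show False by (rule lv_not_both)
    qed
    then have "w d M x = 0" by (simp add: w_def)
    then show False using assms(2) by simp
  qed
  have "x!i \<in> GG P" if i: "i < d" for i
  proof (rule ccontr)
    assume ni: "x!i \<notin> GG P"
    have fin: "finite {..<d}" by simp
    have "(\<Sum>S\<in>Pow {..<d}. (-1::rat)^card ({..<d}-S) * (if lv M x S then 1 else 0)) = 0"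
    proof (rule pairing[OF fin])
      show "i \<in> {..<d}" using i by simp
      fix S
      have "(\<forall>k<d. Cc (fst p!k) (snd p!k) (x!k) (k \<in> insert i S)) = (\<forall>k<d. Cc (fst p!k) (snd p!k) (x!k) (k \<in> S))"
        if p: "p \<in> P" for p
      proof -
        have l: "length (fst p) = d" "length (snd p) = d" using p assms(1) by (auto simp: repr_def)
        have "fst p!i \<in> GG P" "snd p!i \<in> GG P" unfolding GG_def using p i l by (force intro: nth_mem)+
        then have "x!i \<noteq> fst p!i" "x!i \<noteq> snd p!i" using ni by auto
        then have "Cc (fst p!i) (snd p!i) (x!i) True = Cc (fst p!i) (snd p!i) (x!i) (i \<in> S)"
          by (rule Cc_indep)
        then show ?thesis by (metis insert_iff)
      qed
      then show "(if lv M x (insert i S) then 1 else 0) = (if lv M x S then 1 else 0 :: rat)"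
        using lv_char(1)[OF assms(1) len] by (metis (no_types, lifting))
    qed
    then show False using assms(2) by (simp add: w_def)
  qed
  then show ?thesis using len by (auto simp: in_set_conv_nth)
qed

lemma finite_GG: "repr d P M \<Longrightarrow> finite (GG P)"
  by (auto simp: GG_def repr_def)

lemma w_finite:
  assumes "repr d P M"
  shows "finite {x. w d M x \<noteq> 0}"
proof -
  have "{x. w d M x \<noteq> 0} \<subseteq> {xs. set xs \<subseteq> GG P \<and> length xs = d}"
    using w_support[OF assms] by blast
  moreover have "finite {xs. set xs \<subseteq> GG P \<and> length xs = d}"
    by (rule finite_lists_length_eq[OF finite_GG[OF assms]])
  ultimately show ?thesis by (rule finite_subset)
qed

lemma prod_ind: "finite A \<Longrightarrow> (\<Prod>k\<in>A. (if P k then 1 else 0 :: rat)) = (if (\<forall>k\<in>A. P k) then 1 else 0)"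
  by (induction A rule: finite_induct) auto

lemma of_bool_all_split:
  assumes "finite D" "S \<subseteq> D"
  shows "(if (\<forall>k\<in>D. R k (k \<in> S)) then 1 else 0 :: rat) =
     (\<Prod>k\<in>S. if R k True then 1 else 0) * (\<Prod>k\<in>D-S. if R k False then 1 else 0)"
proof -
  have fS: "finite S" using assms finite_subset by blast
  have "(\<forall>k\<in>D. R k (k \<in> S)) = ((\<forall>k\<in>S. R k True) \<and> (\<forall>k\<in>D-S. R k False))"
    using assms(2) by (auto; metis (full_types) DiffI subsetD)
  then show ?thesis using prod_ind[OF fS, of "\<lambda>k. R k True"] prod_ind[of "D-S" "\<lambda>k. R k False"] assms(1)
    by simp
qed

lemma sumprod:
  assumes "finite D"
  shows "(\<Sum>S\<in>Pow D. (-1::rat)^card (D-S) * (if (\<forall>k\<in>D. R k (k \<in> S)) then 1 else 0)) =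
     (\<Prod>k\<in>D. (if R k True then 1 else 0) - (if R k False then 1 else 0))"
proof -
  have "(\<Prod>k\<in>D. (if R k True then 1 else 0) - (if R k False then 1 else 0 :: rat)) =
     (\<Prod>k\<in>D. (if R k True then 1 else 0) + (- (if R k False then 1 else 0 :: rat)))" by simp
  also have "\<dots> = (\<Sum>S\<in>Pow D. (\<Prod>k\<in>S. if R k True then 1 else 0) * (\<Prod>k\<in>D-S. - (if R k False then 1 else 0 :: rat)))"
    by (rule prod_add[OF assms])
  also have "\<dots> = (\<Sum>S\<in>Pow D. (-1::rat)^card (D-S) * (if (\<forall>k\<in>D. R k (k \<in> S)) then 1 else 0))"
  proof (rule sum.cong[OF refl])
    fix S assume "S \<in> Pow D"
    then have S: "S \<subseteq> D" by simp
    have "(\<Prod>k\<in>D-S. - (if R k False then 1 else 0 :: rat)) = (-1)^card (D-S) * (\<Prod>k\<in>D-S. (if R k False then 1 else 0 :: rat))"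
      by (rule prod_uminus)
    then show "(\<Prod>k\<in>S. if R k True then 1 else 0) * (\<Prod>k\<in>D-S. - (if R k False then 1 else 0 :: rat)) =
        (-1::rat)^card (D-S) * (if (\<forall>k\<in>D. R k (k \<in> S)) then 1 else 0)"
      unfolding of_bool_all_split[OF assms S] by simp
  qed
  finally show ?thesis by simp
qed

lemma repr_rect: "length a = d \<Longrightarrow> length b = d \<Longrightarrow> \<forall>i<d. a!i < b!i \<Longrightarrow> repr d {(a,b)} (rect d a b)"
  by (simp add: repr_def)

lemma w_rect:
  assumes la: "length a = d" and lt: "length t = d" and tp: "\<forall>i<d. 0 < t!i" and b: "b = map2 (+) a t"
  shows "w d (rect d a b) x = poly_mapping.lookup (QQ d a b t d) x"
proof -
  have lb: "length b = d" using b la lt by simp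
  have bk: "b!k = a!k + t!k" if "k < d" for k using that b la lt by simp
  have ab: "\<forall>i<d. a!i < b!i" using bk tp by simp
  have R: "repr d {(a,b)} (rect d a b)" by (rule repr_rect[OF la lb ab])
  have lq: "poly_mapping.lookup (QQ d a b t d) x =
     (\<Sum>S\<in>Pow {..<d}. (-1::rat)^card ({..<d}-S) * (if mix d a b t d S = x then 1 else 0))"
    by (simp add: QQ_def Poly_Mapping.lookup_sum lookup_pt)
  show ?thesis
  proof (cases "length x = d")
    case False
    then have "w d (rect d a b) x = 0" using w_support[OF R] by blast
    moreover have "mix d a b t d S \<noteq> x" for S using False by (auto simp: mix_def)
    ultimately show ?thesis using lq by simp
  next
    case True
    have "w d (rect d a b) x = (\<Sum>S\<in>Pow {..<d}. (-1::rat)^card ({..<d}-S) *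
        (if (\<forall>k\<in>{..<d}. Cc (a!k) (b!k) (x!k) (k \<in> S)) then 1 else 0))"
      unfolding w_def using lv_char(1)[OF R True] by (simp add: Ball_def)
    also have "\<dots> = (\<Prod>k\<in>{..<d}. (if Cc (a!k) (b!k) (x!k) True then 1 else 0) - (if Cc (a!k) (b!k) (x!k) False then 1 else 0))"
      by (rule sumprod[of "{..<d}" "\<lambda>k s. Cc (a!k) (b!k) (x!k) s"]) simp
    also have "\<dots> = (\<Prod>k\<in>{..<d}. (if x!k = b!k then 1 else 0) - (if x!k = a!k then 1 else 0))"
    proof (rule prod.cong[OF refl])
      fix k assume "k \<in> {..<d}"
      then have "a!k < b!k" using ab by simp
      then show "(if Cc (a!k) (b!k) (x!k) True then 1 else 0) - (if Cc (a!k) (b!k) (x!k) False then 1 else 0) =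
          (if x!k = b!k then 1 else 0) - (if x!k = a!k then 1 else (0::rat))"
        by (auto simp: Cc_def)
    qed
    also have "\<dots> = (\<Sum>S\<in>Pow {..<d}. (-1::rat)^card ({..<d}-S) *
        (if (\<forall>k\<in>{..<d}. x!k = (if k \<in> S then b!k else a!k)) then 1 else 0))"
      using sumprod[of "{..<d}" "\<lambda>k s. x!k = (if s then b!k else a!k)"] by simp
    also have "\<dots> = poly_mapping.lookup (QQ d a b t d) x"
      unfolding lq
    proof (rule sum.cong[OF refl])
      fix S
      have "(mix d a b t d S = x) = (\<forall>k\<in>{..<d}. x!k = (if k \<in> S then b!k else a!k))"
        using True by (auto simp: mix_def list_eq_iff_nth_eq)
      then show "(-1::rat)^card ({..<d}-S) * (if (\<forall>k\<in>{..<d}. x!k = (if k \<in> S then b!k else a!k)) then 1 else 0) =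
          (-1::rat)^card ({..<d}-S) * (if mix d a b t d S = x then 1 else 0)" by simp
    qed
    finally show ?thesis .
  qed
qed

definition Vf :: "nat \<Rightarrow> real list set \<Rightarrow> tensor" where
  "Vf d M = abs_tensor (Abs_poly_mapping (w d M))"

lemma V_rect:
  assumes la: "length a = d" and lt: "length t = d" and tp: "\<forall>i<d. 0 < t!i"
  shows "Vf d (rect d a (map2 (+) a t)) = ptensor t"
proof -
  define b where "b = map2 (+) a t"
  have lb: "length b = d" using b_def la lt by simp
  have bk: "b!k = a!k + t!k" if "k < d" for k using that b_def la lt by simp
  have ab: "\<forall>i<d. a!i < b!i" using bk tp by simp
  have R: "repr d {(a,b)} (rect d a b)" by (rule repr_rect[OF la lb ab])
  have "Abs_poly_mapping (w d (rect d a b)) = QQ d a b t d"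
    by (rule poly_mapping_eqI) (simp add: w_finite[OF R] w_rect[OF la lt tp b_def])
  moreover have "QQ d a b t d - pt t \<in> tensor_rel" by (rule QQ_final[OF le_refl bk lt])
  ultimately show ?thesis unfolding Vf_def b_def[symmetric] ptensor.abs_eq
    by (simp add: tensor.abs_eq_iff tensor_equiv_def)
qed

lemma multirect_union: "multirect d A \<Longrightarrow> multirect d B \<Longrightarrow> multirect d (A \<union> B)"
  unfolding multirect_def by (metis Sup_union_distrib Un_iff finite_UnI)

lemma V_add:
  assumes "multirect d A" "multirect d B" "A \<inter> B = {}"
  shows "Vf d (A \<union> B) = Vf d A + Vf d B"
proof -
  obtain P where P: "repr d P A" using multirect_repr[OF assms(1)] by blast
  obtain Q where Q: "repr d Q B" using multirect_repr[OF assms(2)] by blast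
  obtain PQ where PQ: "repr d PQ (A \<union> B)" using multirect_repr[OF multirect_union[OF assms(1,2)]] by blast
  have "Abs_poly_mapping (w d (A \<union> B)) = Abs_poly_mapping (w d A) + Abs_poly_mapping (w d B)"
    by (rule poly_mapping_eqI)
       (simp only: Poly_Mapping.lookup_add lookup_Abs_poly_mapping[OF w_finite[OF P]]
          lookup_Abs_poly_mapping[OF w_finite[OF Q]] lookup_Abs_poly_mapping[OF w_finite[OF PQ]] w_union[OF P Q assms(3)])
  then show ?thesis unfolding Vf_def by (simp add: plus_tensor.abs_eq)
qed

lemma V_deg:
  assumes "multirect d M"
  shows "Vf d M \<in> tensor_deg d"
proof -
  obtain P where P: "repr d P M" using multirect_repr[OF assms] by blast
  show ?thesis unfolding tensor_deg_def Vf_def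
    using w_support[OF P] w_finite[OF P] by auto
qed

instance tensor :: comm_monoid_add
proof
  fix a b c :: tensor
  show "a + b + c = a + (b + c)"
    by (induct a rule: tensor.abs_induct, induct b rule: tensor.abs_induct, induct c rule: tensor.abs_induct)
       (simp add: plus_tensor.abs_eq add.assoc)
  show "a + b = b + a"
    by (induct a rule: tensor.abs_induct, induct b rule: tensor.abs_induct)
       (simp add: plus_tensor.abs_eq add.commute)
  show "0 + a = a"
    by (induct a rule: tensor.abs_induct) (simp add: plus_tensor.abs_eq zero_tensor.abs_eq)
qed

definition lo :: "real set \<Rightarrow> real \<Rightarrow> real" where "lo G y = Max {g\<in>G. g \<le> y}"
definition hi :: "real set \<Rightarrow> real \<Rightarrow> real" where "hi G y = Min {g\<in>G. y < g}"

lemma lohi_basic: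
  assumes "finite G" "g \<in> G" "g \<le> x" "h \<in> G" "x < h"
  shows "lo G x \<in> G" "lo G x \<le> x" "hi G x \<in> G" "x < hi G x"
    "\<And>g'. g' \<in> G \<Longrightarrow> g' \<le> x \<Longrightarrow> g' \<le> lo G x"
    "\<And>g'. g' \<in> G \<Longrightarrow> x < g' \<Longrightarrow> hi G x \<le> g'"
proof -
  have f1: "finite {g\<in>G. g \<le> x}" "{g\<in>G. g \<le> x} \<noteq> {}" using assms by auto
  have f2: "finite {g\<in>G. x < g}" "{g\<in>G. x < g} \<noteq> {}" using assms by auto
  show "lo G x \<in> G" "lo G x \<le> x" using Max_in[OF f1] unfolding lo_def by auto
  show "hi G x \<in> G" "x < hi G x" using Min_in[OF f2] unfolding hi_def by auto
  show "\<And>g'. g' \<in> G \<Longrightarrow> g' \<le> x \<Longrightarrow> g' \<le> lo G x" unfolding lo_def using f1 by (simp add: Max_ge)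
  show "\<And>g'. g' \<in> G \<Longrightarrow> x < g' \<Longrightarrow> hi G x \<le> g'" unfolding hi_def using f2 by (simp add: Min_le)
qed

lemma lohi_same:
  assumes "finite G" "g \<in> G" "g \<le> x" "h \<in> G" "x < h" "lo G x \<le> y" "y < hi G x"
  shows "\<And>g'. g' \<in> G \<Longrightarrow> g' \<le> y \<longleftrightarrow> g' \<le> x"
    "\<And>g'. g' \<in> G \<Longrightarrow> y < g' \<longleftrightarrow> x < g'"
    "lo G y = lo G x" "hi G y = hi G x"
proof -
  note B = lohi_basic[OF assms(1-5)]
  show E1: "\<And>g'. g' \<in> G \<Longrightarrow> g' \<le> y \<longleftrightarrow> g' \<le> x"
  proof -
    fix g' assume g': "g' \<in> G"
    show "g' \<le> y \<longleftrightarrow> g' \<le> x"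
    proof
      assume "g' \<le> y"
      show "g' \<le> x"
      proof (rule ccontr)
        assume "\<not> g' \<le> x"
        then have "hi G x \<le> g'" using B(6)[OF g'] by simp
        then show False using \<open>g' \<le> y\<close> assms(7) by simp
      qed
    next
      assume "g' \<le> x"
      then show "g' \<le> y" using B(5)[OF g'] assms(6) by simp
    qed
  qed
  show E2: "\<And>g'. g' \<in> G \<Longrightarrow> y < g' \<longleftrightarrow> x < g'"
    using E1 by (meson not_le)
  have "{g\<in>G. g \<le> y} = {g\<in>G. g \<le> x}" using E1 by auto
  then show "lo G y = lo G x" by (simp add: lo_def)
  have "{g\<in>G. y < g} = {g\<in>G. x < g}" using E2 by auto
  then show "hi G y = hi G x" by (simp add: hi_def)
qed

definition cell :: "nat \<Rightarrow> real set \<Rightarrow> real list \<Rightarrow> real list set" where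
  "cell d G x = rect d (map (lo G) x) (map (hi G) x)"

context
  fixes d P M
  assumes R: "repr d P M"
begin

lemma bracket:
  assumes "x \<in> M" "k < d"
  shows "\<exists>g\<in>GG P. g \<le> x!k" "\<exists>h\<in>GG P. x!k < h"
proof -
  obtain p where p: "p \<in> P" "x \<in> rect d (fst p) (snd p)" using assms R by (auto simp: repr_def)
  have l: "length (fst p) = d" "length (snd p) = d" using p R by (auto simp: repr_def)
  have "fst p!k \<in> GG P" "snd p!k \<in> GG P" unfolding GG_def using p assms(2) l by (force intro: nth_mem)+
  moreover have "fst p!k \<le> x!k" "x!k < snd p!k" using p assms(2) by (auto simp: rect_def)
  ultimately show "\<exists>g\<in>GG P. g \<le> x!k" "\<exists>h\<in>GG P. x!k < h" by auto
qed

lemma cell_props: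
  assumes x: "x \<in> M"
  shows "x \<in> cell d (GG P) x"
    and "\<And>y. y \<in> cell d (GG P) x \<Longrightarrow> y \<in> M \<and> cell d (GG P) y = cell d (GG P) x"
    and "set (map (lo (GG P)) x) \<subseteq> GG P" "set (map (hi (GG P)) x) \<subseteq> GG P"
    and "length x = d" "\<forall>k<d. lo (GG P) (x!k) < hi (GG P) (x!k)"
proof -
  let ?G = "GG P"
  have fG: "finite ?G" by (rule finite_GG[OF R])
  show lx: "length x = d" by (rule repr_len[OF R x])
  have B: "lo ?G (x!k) \<in> ?G \<and> lo ?G (x!k) \<le> x!k \<and> hi ?G (x!k) \<in> ?G \<and> x!k < hi ?G (x!k)" if "k < d" for k
    using bracket[OF x that] lohi_basic[OF fG] by blast
  show "x \<in> cell d ?G x" using B lx by (auto simp: cell_def rect_def)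
  show "set (map (lo ?G) x) \<subseteq> ?G" "set (map (hi ?G) x) \<subseteq> ?G" using B lx by (auto simp: in_set_conv_nth)
  show "\<forall>k<d. lo ?G (x!k) < hi ?G (x!k)" using B by force
  fix y assume y: "y \<in> cell d ?G x"
  then have ly: "length y = d" and yk: "\<And>k. k < d \<Longrightarrow> lo ?G (x!k) \<le> y!k \<and> y!k < hi ?G (x!k)"
    using lx by (auto simp: cell_def rect_def)
  have S: "(\<forall>g'\<in>?G. g' \<le> y!k \<longleftrightarrow> g' \<le> x!k) \<and> (\<forall>g'\<in>?G. y!k < g' \<longleftrightarrow> x!k < g') \<and>
      lo ?G (y!k) = lo ?G (x!k) \<and> hi ?G (y!k) = hi ?G (x!k)" if k: "k < d" for k
  proof -
    obtain g h where gh: "g \<in> ?G" "g \<le> x!k" "h \<in> ?G" "x!k < h" using bracket[OF x k] by blast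
    show ?thesis using lohi_same[OF fG gh yk[OF k, THEN conjunct1] yk[OF k, THEN conjunct2]] by blast
  qed
  have "map (lo ?G) y = map (lo ?G) x" using S lx ly by (intro nth_equalityI) auto
  moreover have "map (hi ?G) y = map (hi ?G) x" using S lx ly by (intro nth_equalityI) auto
  ultimately have "cell d ?G y = cell d ?G x" unfolding cell_def by simp
  moreover have "y \<in> M"
  proof -
    obtain p where p: "p \<in> P" "x \<in> rect d (fst p) (snd p)" using x R by (auto simp: repr_def)
    have l: "length (fst p) = d" "length (snd p) = d" using p R by (auto simp: repr_def)
    have "y \<in> rect d (fst p) (snd p)"
      unfolding rect_def
    proof (intro CollectI conjI ly allI impI)
      fix k assume k: "k < d"
      have "fst p!k \<in> ?G" "snd p!k \<in> ?G" unfolding GG_def using p k l by (force intro: nth_mem)+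
      then show "fst p!k \<le> y!k" "y!k < snd p!k" using S[OF k] p k by (auto simp: rect_def)
    qed
    then show ?thesis using p R by (auto simp: repr_def)
  qed
  ultimately show "y \<in> M \<and> cell d ?G y = cell d ?G x" by simp
qed

lemma cells_finite: "finite (cell d (GG P) ` M)"
proof -
  let ?G = "GG P"
  let ?L = "{xs. set xs \<subseteq> ?G \<and> length xs = d}"
  have fL: "finite ?L" by (rule finite_lists_length_eq[OF finite_GG[OF R]])
  have "cell d ?G ` M \<subseteq> (\<lambda>(l,h). rect d l h) ` (?L \<times> ?L)"
  proof
    fix C assume "C \<in> cell d ?G ` M"
    then obtain x where x: "x \<in> M" "C = cell d ?G x" by blast
    show "C \<in> (\<lambda>(l,h). rect d l h) ` (?L \<times> ?L)"
    proof (rule image_eqI[of _ _ "(map (lo ?G) x, map (hi ?G) x)"])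
      show "C = (\<lambda>(l,h). rect d l h) (map (lo ?G) x, map (hi ?G) x)" using x(2) by (simp add: cell_def)
      show "(map (lo ?G) x, map (hi ?G) x) \<in> ?L \<times> ?L"
        using cell_props(3,4,5)[OF x(1)] by simp
    qed
  qed
  moreover have "finite ((\<lambda>(l,h). rect d l h) ` (?L \<times> ?L))"
    by (rule finite_imageI[OF finite_cartesian_product[OF fL fL]])
  ultimately show ?thesis by (rule finite_subset)
qed

lemma cells_union: "\<Union> (cell d (GG P) ` M) = M"
proof
  show "\<Union> (cell d (GG P) ` M) \<subseteq> M"
  proof
    fix y assume "y \<in> \<Union> (cell d (GG P) ` M)"
    then obtain x where x: "x \<in> M" "y \<in> cell d (GG P) x" by blast
    show "y \<in> M" using cell_props(2)[OF x] by simp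
  qed
  show "M \<subseteq> \<Union> (cell d (GG P) ` M)"
  proof
    fix x assume x: "x \<in> M"
    show "x \<in> \<Union> (cell d (GG P) ` M)" using cell_props(1)[OF x] x by blast
  qed
qed

lemma cells_disjoint:
  assumes "C \<in> cell d (GG P) ` M" "C' \<in> cell d (GG P) ` M" "C \<noteq> C'"
  shows "C \<inter> C' = {}"
proof (rule ccontr)
  assume "C \<inter> C' \<noteq> {}"
  then obtain z where z: "z \<in> C" "z \<in> C'" by blast
  obtain x where x: "x \<in> M" "C = cell d (GG P) x" using assms(1) by blast
  obtain x' where x': "x' \<in> M" "C' = cell d (GG P) x'" using assms(2) by blast
  have "cell d (GG P) z = C" using cell_props(2)[OF x(1), of z] z x by simp
  moreover have "cell d (GG P) z = C'" using cell_props(2)[OF x'(1), of z] z x' by simp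
  ultimately show False using assms(3) by simp
qed

lemma cells_good:
  assumes "C \<in> cell d (GG P) ` M"
  shows "\<exists>l t. length l = d \<and> length t = d \<and> (\<forall>i<d. 0 < t!i) \<and> C = rect d l (map2 (+) l t)"
proof -
  let ?G = "GG P"
  obtain x where x: "x \<in> M" "C = cell d ?G x" using assms by blast
  note cp = cell_props[OF x(1)]
  let ?l = "map (lo ?G) x" and ?h = "map (hi ?G) x"
  let ?t = "map2 (-) ?h ?l"
  have e: "map2 (+) ?l ?t = ?h" by (intro nth_equalityI) auto
  have l1: "length ?l = d" "length ?t = d" using cp(5) by auto
  have l2: "\<forall>i<d. 0 < ?t!i" using cp(5,6) by auto
  have "C = rect d ?l (map2 (+) ?l ?t)" unfolding e using x(2) by (simp add: cell_def)
  then show ?thesis using l1 l2 by blast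
qed

end

lemma W_sum:
  fixes W :: "real list set \<Rightarrow> tensor"
  assumes add: "\<forall>A B. multirect d A \<and> multirect d B \<and> A \<inter> B = {} \<longrightarrow> W (A \<union> B) = W A + W B"
    and fin: "finite K" and rects: "\<forall>C\<in>K. is_rect d C"
    and disj: "\<forall>C\<in>K. \<forall>C'\<in>K. C \<noteq> C' \<longrightarrow> C \<inter> C' = {}"
  shows "W (\<Union>K) = (\<Sum>C\<in>K. W C)"
proof -
  have mr0: "multirect d {}" unfolding multirect_def by (intro exI[of _ "{}"]) auto
  have "W ({} \<union> {}) = W {} + W {}" using add[rule_format, of "{}" "{}"] mr0 by simp
  then have "W {} + W {} = W {}" by simp
  then have W0: "W {} = 0" by (rule tensor_cancel)
  show ?thesis using fin rects disj
  proof (induction K rule: finite_induct)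
    case empty then show ?case by (simp add: W0)
  next
    case (insert C K)
    have mC: "multirect d C" using insert.prems(1) unfolding multirect_def
      by (intro exI[of _ "{C}"]) auto
    have mK: "multirect d (\<Union>K)" using insert.prems(1) insert.hyps(1) unfolding multirect_def
      by (intro exI[of _ K]) simp
    have dj: "C \<inter> \<Union>K = {}"
    proof -
      have "C \<inter> C' = {}" if "C' \<in> K" for C'
        using insert.prems(2) insert.hyps(2) that by (metis insertCI)
      then show ?thesis by blast
    qed
    have "W (\<Union>(insert C K)) = W (C \<union> \<Union>K)" by simp
    also have "\<dots> = W C + W (\<Union>K)" using add[rule_format, of C "\<Union>K"] mC mK dj by simp
    also have "W (\<Union>K) = (\<Sum>C\<in>K. W C)" using insert.IH insert.prems by simp
    finally show ?case using insert.hyps by simp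
  qed
qed

lemma good_is_rect:
  "length l = d \<Longrightarrow> length t = d \<Longrightarrow> \<forall>i<d. 0 < t!i \<Longrightarrow> is_rect d (rect d l (map2 (+) l t))"
  unfolding is_rect_def by (intro exI[of _ l] exI[of _ "map2 (+) l t"]) auto

lemma uniq:
  fixes W :: "real list set \<Rightarrow> tensor"
  assumes add: "\<forall>A B. multirect d A \<and> multirect d B \<and> A \<inter> B = {} \<longrightarrow> W (A \<union> B) = W A + W B"
    and rct: "\<forall>a t. length a = d \<and> length t = d \<and> (\<forall>i<d. 0 < t ! i) \<longrightarrow> W (rect d a (map2 (+) a t)) = ptensor t"
    and M: "multirect d M"
  shows "W M = Vf d M"
proof -
  obtain P where P: "repr d P M" using multirect_repr[OF M] by blast
  let ?K = "cell d (GG P) ` M"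
  have fin: "finite ?K" by (rule cells_finite[OF P])
  have rects: "\<forall>C\<in>?K. is_rect d C"
  proof
    fix C assume "C \<in> ?K"
    then obtain l t where "length l = d" "length t = d" "\<forall>i<d. 0 < t!i" "C = rect d l (map2 (+) l t)"
      using cells_good[OF P] by blast
    then show "is_rect d C" using good_is_rect by simp
  qed
  have disj: "\<forall>C\<in>?K. \<forall>C'\<in>?K. C \<noteq> C' \<longrightarrow> C \<inter> C' = {}" using cells_disjoint[OF P] by blast
  have addV: "\<forall>A B. multirect d A \<and> multirect d B \<and> A \<inter> B = {} \<longrightarrow> Vf d (A \<union> B) = Vf d A + Vf d B"
    using V_add by blast
  have "W M = W (\<Union>?K)" using cells_union[OF P] by simp
  also have "\<dots> = (\<Sum>C\<in>?K. W C)" by (rule W_sum[OF add fin rects disj])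
  also have "\<dots> = (\<Sum>C\<in>?K. Vf d C)"
  proof (rule sum.cong[OF refl])
    fix C assume "C \<in> ?K"
    then obtain l t where lt: "length l = d" "length t = d" "\<forall>i<d. 0 < t!i" and C: "C = rect d l (map2 (+) l t)"
      using cells_good[OF P] by blast
    have "W C = ptensor t" using rct lt C by blast
    moreover have "Vf d C = ptensor t" using V_rect[OF lt] C by simp
    ultimately show "W C = Vf d C" by simp
  qed
  also have "\<dots> = Vf d (\<Union>?K)" by (rule W_sum[OF addV fin rects disj, symmetric])
  also have "\<Union>?K = M" by (rule cells_union[OF P])
  finally show ?thesis .
qed

theorem mainTheorem13:
  fixes d :: nat
  assumes "d \<ge> 1"
  shows "\<exists>V :: real list set \<Rightarrow> tensor.
           ((\<forall>M. multirect d M \<longrightarrow> V M \<in> tensor_deg d)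
            \<and> (\<forall>A B. multirect d A \<and> multirect d B \<and> A \<inter> B = {} \<longrightarrow> V (A \<union> B) = V A + V B)
            \<and> (\<forall>a t. length a = d \<and> length t = d \<and> (\<forall>i<d. 0 < t ! i) \<longrightarrow>
                  V (rect d a (map2 (+) a t)) = ptensor t))
         \<and> (\<forall>W :: real list set \<Rightarrow> tensor.
              ((\<forall>M. multirect d M \<longrightarrow> W M \<in> tensor_deg d)
               \<and> (\<forall>A B. multirect d A \<and> multirect d B \<and> A \<inter> B = {} \<longrightarrow> W (A \<union> B) = W A + W B)
               \<and> (\<forall>a t. length a = d \<and> length t = d \<and> (\<forall>i<d. 0 < t ! i) \<longrightarrow>
                     W (rect d a (map2 (+) a t)) = ptensor t))
              \<longrightarrow> (\<forall>M. multirect d M \<longrightarrow> W M = V M))"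
proof (intro exI[of _ "Vf d"] conjI allI impI)
  show "\<And>M. multirect d M \<Longrightarrow> Vf d M \<in> tensor_deg d" by (rule V_deg)
  show "\<And>A B. multirect d A \<and> multirect d B \<and> A \<inter> B = {} \<Longrightarrow> Vf d (A \<union> B) = Vf d A + Vf d B"
    using V_add by blast
  show "\<And>a t. length a = d \<and> length t = d \<and> (\<forall>i<d. 0 < t ! i) \<Longrightarrow> Vf d (rect d a (map2 (+) a t)) = ptensor t"
    using V_rect by blast
  fix W :: "real list set \<Rightarrow> tensor" and M
  assume H: "(\<forall>M. multirect d M \<longrightarrow> W M \<in> tensor_deg d)
               \<and> (\<forall>A B. multirect d A \<and> multirect d B \<and> A \<inter> B = {} \<longrightarrow> W (A \<union> B) = W A + W B)
               \<and> (\<forall>a t. length a = d \<and> length t = d \<and> (\<forall>i<d. 0 < t ! i) \<longrightarrow>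
                     W (rect d a (map2 (+) a t)) = ptensor t)"
    and M: "multirect d M"
  show "W M = Vf d M" by (rule uniq[OF H[THEN conjunct2, THEN conjunct1] H[THEN conjunct2, THEN conjunct2] M])
qed

end
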